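(* For every $k\in\mathbb{N}$ there exists a nondeterministic parity automaton $\mathcal{A}$ with $O(k)$ states such that, for every bound $n\ge|\mathcal{A}|$ (the number of states of $\mathcal{A}$), every deterministic parity automaton $\mathcal{A}'$ with $L(\mathcal{A}')\subseteq L(\mathcal{A})$ and $L_n(L(\mathcal{A}'))=L_n(L(\mathcal{A}))$ has at least $2^k$ states.
   Context: A lasso of length $n$ over a finite alphabet $\Sigma$ is a pair $(u,v)$ with $u\in\Sigma^*$, $v\in\Sigma^+$, $|u\cdot v|=n$, inducing $u\cdot v^\omega$. For $\psi\subseteq\Sigma^\omega$, $L_n(\psi)=\{u\cdot v^\omega \in \psi \mid u\in\Sigma^*, v\in\Sigma^+, |u\cdot v|=n\}$. A nondeterministic parity automaton is $(Q,Q_0,\delta,\mu)$ with finite $Q$, $Q_0\subseteq Q$, $\delta:Q\times\Sigma\to\mathcal{P}(Q)$, coloring $\mu:Q\to C$, $C\subset\mathbb{N}$ finite. A run on $\alpha_1\alpha_2\cdots$ is $q_0q_1\cdots$ with $q_0\in Q_0$ and $q_{i+1}\in\delta(q_i,\alpha_{i+1})$; it is accepting if the highest color occurring infinitely often along it is even; $L(\cdot)$ is the set of words with an accepting run. Deterministic means $|Q_0|=1$ and $|\delta(q,\alpha)|\le1$ for all $q,\alpha$ (missing successors allowed). *)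

theory Defs
  imports Main "HOL-Library.Omega_Words_Fun"
begin

record ('q, 'a) pa =
  states :: "'q set"
  init   :: "'q set"
  trans  :: "'q \<Rightarrow> 'a \<Rightarrow> 'q set"
  col    :: "'q \<Rightarrow> nat"

definition wf_pa :: "'a set \<Rightarrow> ('q, 'a) pa \<Rightarrow> bool" where
  "wf_pa \<Sigma> A \<longleftrightarrow> finite (states A) \<and> init A \<subseteq> states A \<and>
     (\<forall>q\<in>states A. \<forall>a\<in>\<Sigma>. trans A q a \<subseteq> states A)"

definition deterministic :: "'a set \<Rightarrow> ('q, 'a) pa \<Rightarrow> bool" where
  "deterministic \<Sigma> A \<longleftrightarrow> card (init A) = 1 \<and>
     (\<forall>q\<in>states A. \<forall>a\<in>\<Sigma>. card (trans A q a) \<le> 1)"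

definition is_run :: "('q, 'a) pa \<Rightarrow> 'a word \<Rightarrow> 'q word \<Rightarrow> bool" where
  "is_run A w r \<longleftrightarrow> r 0 \<in> init A \<and> (\<forall>i. r (Suc i) \<in> trans A (r i) (w i))"

definition accepting :: "('q, 'a) pa \<Rightarrow> 'q word \<Rightarrow> bool" where
  "accepting A r \<longleftrightarrow> even (Max {c. \<exists>\<^sub>\<infinity> i. col A (r i) = c})"

definition lang :: "'a set \<Rightarrow> ('q, 'a) pa \<Rightarrow> 'a word set" where
  "lang \<Sigma> A = {w. (\<forall>i. w i \<in> \<Sigma>) \<and> (\<exists>r. is_run A w r \<and> accepting A r)}"

definition lasso_lang :: "'a set \<Rightarrow> nat \<Rightarrow> 'a word set \<Rightarrow> 'a word set" where
  "lasso_lang \<Sigma> n \<psi> = {w \<in> \<psi>. \<exists>u v. set u \<subseteq> \<Sigma> \<and> set v \<subseteq> \<Sigma> \<and> v \<noteq> [] \<and>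
      length u + length v = n \<and> w = u \<frown> v\<^sup>\<omega>}"

end

theory Submission
  imports Defs
begin

definition Sg :: "nat set" where "Sg = {0,1,2}"

definition autA :: "nat \<Rightarrow> (nat, nat) pa" where
  "autA k = \<lparr>states = {0..<3*k+3}, init = {0},
     trans = (\<lambda>q a. if q = 0 then (if a = 1 then {0,1} else {0})
                 else if q < k then {Suc q}
                 else if q = k then (if a = 2 then {Suc k} else {})
                 else if q = Suc k then {Suc k} else {}),
     col = (\<lambda>q. if q = Suc k then 0 else 1)\<rparr>"

lemma wfA: "wf_pa Sg (autA k)"
  unfolding wf_pa_def autA_def by auto

lemma cardA: "card (states (autA k)) = 3*k+3"
  unfolding autA_def by simp

lemma back_q:
  assumes "k \<ge> 1" "is_run (autA k) w r"
  shows "1 \<le> q \<Longrightarrow> q \<le> k \<Longrightarrow> r t = q \<Longrightarrow> q \<le> t \<and> w (t - q) = 1"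
proof (induction q arbitrary: t)
  case 0 then show ?case by simp
next
  case (Suc q)
  have r0: "r 0 = 0" using assms(2) by (simp add: is_run_def autA_def)
  have "t \<noteq> 0"
  proof
    assume "t = 0" then show False using Suc.prems(3) r0 by simp
  qed
  then obtain s where t: "t = Suc s" by (cases t) auto
  have st: "r t \<in> trans (autA k) (r s) (w s)" using assms(2) t by (simp add: is_run_def)
  show ?case
  proof (cases q)
    case 0
    then have "r s = 0 \<and> w s = 1" using st Suc.prems assms(1)
      by (auto simp: autA_def split: if_splits)
    then show ?thesis using t 0 by simp
  next
    case (Suc q')
    then have "r s = q" using st Suc.prems assms(1)
      by (auto simp: autA_def split: if_splits)
    then have "q \<le> s \<and> w (s - q) = 1" using Suc.IH Suc.prems \<open>q = Suc q'\<close> by auto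
    then show ?thesis using t by simp
  qed
qed

lemma hit_acc:
  assumes "k \<ge> 1" "is_run (autA k) w r"
  shows "r t = Suc k \<Longrightarrow> \<exists>i. w i = 1 \<and> w (i + k) = 2"
proof (induction t)
  case 0 then show ?case using assms(2) by (simp add: is_run_def autA_def)
next
  case (Suc s)
  have st: "r (Suc s) \<in> trans (autA k) (r s) (w s)" using assms(2) by (simp add: is_run_def)
  show ?case
  proof (cases "r s = Suc k")
    case True then show ?thesis using Suc.IH by simp
  next
    case False
    then have "r s = k \<and> w s = 2" using st Suc.prems assms(1)
      by (auto simp: autA_def split: if_splits)
    then have "k \<le> s \<and> w (s - k) = 1" using back_q[OF assms, of k s] assms(1) by auto
    then show ?thesis using \<open>r s = k \<and> w s = 2\<close> by (intro exI[of _ "s - k"]) auto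
  qed
qed

lemma langA:
  assumes "k \<ge> 1"
  shows "lang Sg (autA k) = {w. (\<forall>i. w i \<in> Sg) \<and> (\<exists>i. w i = 1 \<and> w (i+k) = 2)}"
proof (intro set_eqI iffI)
  fix w assume "w \<in> lang Sg (autA k)"
  then obtain r where w: "\<forall>i. w i \<in> Sg" and run: "is_run (autA k) w r" and acc: "accepting (autA k) r"
    by (auto simp: lang_def)
  show "w \<in> {w. (\<forall>i. w i \<in> Sg) \<and> (\<exists>i. w i = 1 \<and> w (i+k) = 2)}"
  proof (cases "\<exists>t. r t = Suc k")
    case True
    then show ?thesis using hit_acc[OF assms run] w by auto
  next
    case False
    then have "{c. \<exists>\<^sub>\<infinity> i. col (autA k) (r i) = c} = {1}"
      by (auto simp: autA_def)
    then show ?thesis using acc by (simp add: accepting_def)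
  qed
next
  fix w assume "w \<in> {w. (\<forall>i. w i \<in> Sg) \<and> (\<exists>i. w i = 1 \<and> w (i+k) = 2)}"
  then obtain i where w: "\<forall>i. w i \<in> Sg" and i: "w i = 1" "w (i+k) = 2" by auto
  define r where "r t = (if t \<le> i then 0 else if t \<le> i + k then t - i else Suc k)" for t
  have run: "is_run (autA k) w r"
    unfolding is_run_def
  proof (intro conjI allI)
    show "r 0 \<in> init (autA k)" by (simp add: r_def autA_def)
  next
    fix t
    consider "t < i" | "t = i" | "i < t \<and> t < i + k" | "t = i + k" | "t > i + k" by linarith
    then show "r (Suc t) \<in> trans (autA k) (r t) (w t)"
      by cases (use i assms in \<open>auto simp: r_def autA_def\<close>)
  qed
  have "{c. \<exists>\<^sub>\<infinity> t. col (autA k) (r t) = c} = {0}"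
  proof -
    have "\<forall>t > i + k. col (autA k) (r t) = 0" by (auto simp: r_def autA_def)
    then show ?thesis
      by (auto simp: INFM_nat) (metis less_add_one nat_neq_iff not_add_less1 add.commute trans_less_add2)+
  qed
  then have "accepting (autA k) r" by (simp add: accepting_def)
  then show "w \<in> lang Sg (autA k)" using w run by (auto simp: lang_def)
qed


lemma run_in_states:
  assumes "wf_pa \<Sigma> B" "\<forall>i. w i \<in> \<Sigma>" "is_run B w r"
  shows "r t \<in> states B"
proof (induction t)
  case 0 then show ?case using assms by (auto simp: wf_pa_def is_run_def)
next
  case (Suc t) then show ?case using assms unfolding wf_pa_def is_run_def by blast
qed

lemma run_unique:
  assumes wf: "wf_pa \<Sigma> B" and det: "deterministic \<Sigma> B"
    and w1: "\<forall>i. w1 i \<in> \<Sigma>" and w2: "\<forall>i. w2 i \<in> \<Sigma>"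
    and r1: "is_run B w1 r1" and r2: "is_run B w2 r2"
    and eq: "\<forall>i<m. w1 i = w2 i"
  shows "t \<le> m \<Longrightarrow> r1 t = r2 t"
proof (induction t)
  case 0
  have "r1 0 \<in> init B" "r2 0 \<in> init B" using r1 r2 by (auto simp: is_run_def)
  moreover have "card (init B) = 1" using det by (simp add: deterministic_def)
  ultimately show ?case by (metis card_1_singletonE singletonD)
next
  case (Suc t)
  then have e: "r1 t = r2 t" and wt: "w1 t = w2 t" using eq by auto
  have q: "r1 t \<in> states B" using run_in_states[OF wf w1 r1] .
  have a: "w1 t \<in> \<Sigma>" using w1 by auto
  have fin: "finite (trans B (r1 t) (w1 t))"
    using wf q a unfolding wf_pa_def by (meson finite_subset)
  have c: "card (trans B (r1 t) (w1 t)) \<le> Suc 0" using det q a by (simp add: deterministic_def)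
  have "r1 (Suc t) \<in> trans B (r1 t) (w1 t)" "r2 (Suc t) \<in> trans B (r1 t) (w1 t)"
    using r1 r2 e wt unfolding is_run_def by (blast, metis)
  then show ?case using card_le_Suc0_iff_eq[OF fin] c by blast
qed

lemma acc_cong:
  assumes "\<forall>t>m. r1 t = r2 t"
  shows "accepting B r1 = accepting B r2"
proof -
  have "(\<exists>\<^sub>\<infinity> i. col B (r1 i) = c) = (\<exists>\<^sub>\<infinity> i. col B (r2 i) = c)" for c
    unfolding INFM_nat
  proof (intro iffI allI)
    fix m' assume h: "\<forall>m'. \<exists>n>m'. col B (r1 n) = c"
    obtain n where "n > max m m'" "col B (r1 n) = c" using h by blast
    then show "\<exists>n>m'. col B (r2 n) = c" using assms by (intro exI[of _ n]) auto
  next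
    fix m' assume h: "\<forall>m'. \<exists>n>m'. col B (r2 n) = c"
    obtain n where "n > max m m'" "col B (r2 n) = c" using h by blast
    then show "\<exists>n>m'. col B (r1 n) = c" using assms by (intro exI[of _ n]) auto
  qed
  then show ?thesis by (simp add: accepting_def)
qed

lemma lasso_ex:
  fixes w :: "nat word"
  assumes "\<forall>i. w i \<in> \<Sigma>" "\<forall>t\<ge>m. w t = 0" "m < n" "0 \<in> \<Sigma>"
  shows "\<exists>u v. set u \<subseteq> \<Sigma> \<and> set v \<subseteq> \<Sigma> \<and> v \<noteq> [] \<and> length u + length v = n \<and> w = u \<frown> v\<^sup>\<omega>"
proof (intro exI conjI)
  let ?u = "map w [0..<n-1]"
  show "set ?u \<subseteq> \<Sigma>" using assms by auto
  show "set [0::nat] \<subseteq> \<Sigma>" using assms by auto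
  show "[0::nat] \<noteq> []" by simp
  show "length ?u + length [0::nat] = n" using assms by simp
  show "w = ?u \<frown> [0]\<^sup>\<omega>"
  proof
    fix t show "w t = (?u \<frown> [0]\<^sup>\<omega>) t"
      by (cases "t < n - 1") (use assms in auto)
  qed
qed


lemma main_bound:
  assumes k: "k \<ge> 1" and n: "n \<ge> 3*k+3" and wf: "wf_pa Sg B" and det: "deterministic Sg B"
    and sub: "lang Sg B \<subseteq> lang Sg (autA k)"
    and eqL: "lasso_lang Sg n (lang Sg B) = lasso_lang Sg n (lang Sg (autA k))"
  shows "2^k \<le> card (states B)"
proof -
  have inB: "w \<in> lang Sg B" if "\<forall>i. w i \<in> Sg" "\<forall>t\<ge>m. w t = 0" "m < n" "\<exists>i. w i = 1 \<and> w (i+k) = 2"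
    for w m
  proof -
    have "w \<in> lasso_lang Sg n (lang Sg (autA k))"
      using lasso_ex[OF that(1-3)] that langA[OF k] by (auto simp: lasso_lang_def Sg_def)
    then show ?thesis using eqL by (auto simp: lasso_lang_def)
  qed
  define S where "S = {xs. set xs \<subseteq> {0::nat,1} \<and> length xs = k}"
  define Z where "Z xs t = (if t < k then xs!t else if t = k then 1 else if t = 2*k then 2 else 0)"
    for xs :: "nat list" and t
  define F where "F xs j t = (if t < k then xs!t else if t = k+j then 2 else 0)"
    for xs :: "nat list" and j t :: nat
  have nthS: "xs!t \<in> {0,1}" if "xs \<in> S" "t < k" for xs t
  proof -
    have "t < length xs" using that by (simp add: S_def)
    then have "xs!t \<in> set xs" by simp
    then show ?thesis using that unfolding S_def by blast
  qed
  have ZS: "\<forall>i. Z xs i \<in> Sg" if "xs \<in> S" for xs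
  proof
    fix i show "Z xs i \<in> Sg" using nthS[OF that, of i] by (auto simp: Z_def Sg_def)
  qed
  have FS: "\<forall>i. F xs j i \<in> Sg" if "xs \<in> S" for xs j
  proof
    fix i show "F xs j i \<in> Sg" using nthS[OF that, of i] by (auto simp: F_def Sg_def)
  qed
  have Zin: "Z xs \<in> lang Sg B" if "xs \<in> S" for xs
  proof (rule inB[of _ "2*k+1"])
    show "\<forall>i. Z xs i \<in> Sg" using ZS[OF that] .
    show "\<forall>t\<ge>2*k+1. Z xs t = 0" using k by (auto simp: Z_def)
    show "2*k+1 < n" using n k by simp
    show "\<exists>i. Z xs i = 1 \<and> Z xs (i+k) = 2" using k by (intro exI[of _ k]) (auto simp: Z_def)
  qed
  define rr where "rr xs = (SOME r. is_run B (Z xs) r)" for xs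
  define phi where "phi xs = rr xs k" for xs
  have Zrun: "is_run B (Z xs) (rr xs)" if "xs \<in> S" for xs
  proof -
    have "\<exists>r. is_run B (Z xs) r" using Zin[OF that] by (auto simp: lang_def)
    then show ?thesis unfolding rr_def by (rule someI_ex)
  qed
  have key: "phi xs \<noteq> phi ys" if xs: "xs \<in> S" and ys: "ys \<in> S" and j: "j < k"
    and xj: "xs!j = 1" and yj: "ys!j = 0" for xs ys j
  proof
    assume eq: "phi xs = phi ys"
    have "F xs j \<in> lang Sg B"
    proof (rule inB[of _ "2*k+1"])
      show "\<forall>i. F xs j i \<in> Sg" using FS[OF xs] .
      show "\<forall>t\<ge>2*k+1. F xs j t = 0" using j by (auto simp: F_def)
      show "2*k+1 < n" using n k by simp
      show "\<exists>i. F xs j i = 1 \<and> F xs j (i+k) = 2" using j xj by (intro exI[of _ j]) (auto simp: F_def)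
    qed
    then obtain r1 where r1: "is_run B (F xs j) r1" "accepting B r1" by (auto simp: lang_def)
    have "r1 k = rr xs k"
      by (rule run_unique[OF wf det FS[OF xs] ZS[OF xs] r1(1) Zrun[OF xs], of k k])
        (auto simp: F_def Z_def)
    then have r1k: "r1 k = rr ys k" using eq by (simp add: phi_def)
    define r' where "r' t = (if t \<le> k then rr ys t else r1 t)" for t
    have ry: "is_run B (Z ys) (rr ys)" using Zrun[OF ys] .
    have run': "is_run B (F ys j) r'"
      unfolding is_run_def
    proof (intro conjI allI)
      show "r' 0 \<in> init B" using ry by (simp add: r'_def is_run_def)
    next
      fix t
      consider "t < k" | "t = k" | "t > k" by linarith
      then show "r' (Suc t) \<in> trans B (r' t) (F ys j t)"
      proof cases
        case 1
        have "rr ys (Suc t) \<in> trans B (rr ys t) (Z ys t)" using ry unfolding is_run_def by blast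
        then show ?thesis using 1 by (auto simp: r'_def F_def Z_def)
      next
        case 2
        have "r1 (Suc t) \<in> trans B (r1 t) (F xs j t)" using r1(1) by (simp add: is_run_def)
        moreover have "r' (Suc t) = r1 (Suc t)" using 2 by (simp add: r'_def)
        moreover have "r' t = r1 t" using 2 r1k by (simp add: r'_def)
        moreover have "F ys j t = F xs j t" using 2 by (simp add: F_def)
        ultimately show ?thesis by (simp only:)
      next
        case 3
        have "r1 (Suc t) \<in> trans B (r1 t) (F xs j t)" using r1(1) by (simp add: is_run_def)
        moreover have "r' (Suc t) = r1 (Suc t)" using 3 by (simp add: r'_def)
        moreover have "r' t = r1 t" using 3 by (simp add: r'_def)
        moreover have "F ys j t = F xs j t" using 3 by (simp add: F_def)
        ultimately show ?thesis by (simp only:)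
      qed
    qed
    have "accepting B r'" using acc_cong[of k r' r1 B] r1(2) by (auto simp: r'_def)
    then have "F ys j \<in> lang Sg B" using run' FS[OF ys] by (auto simp: lang_def)
    then have "F ys j \<in> lang Sg (autA k)" using sub by auto
    then obtain i where i: "F ys j i = 1" "F ys j (i+k) = 2" using langA[OF k] by auto
    then have "i = j" by (auto simp: F_def split: if_splits)
    then show False using i j yj by (simp add: F_def)
  qed
  have inj: "inj_on phi S"
  proof
    fix xs ys assume xs: "xs \<in> S" and ys: "ys \<in> S" and e: "phi xs = phi ys"
    show "xs = ys"
    proof (rule ccontr)
      assume "xs \<noteq> ys"
      moreover have "length xs = length ys" using xs ys by (simp add: S_def)
      ultimately have "\<exists>j<length xs. xs!j \<noteq> ys!j" using nth_equalityI by blast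
      moreover have "length xs = k" using xs by (simp add: S_def)
      ultimately obtain j where j: "j < k" "xs!j \<noteq> ys!j" by auto
      have "xs!j \<in> {0,1}" "ys!j \<in> {0,1}" using nthS xs ys j by auto
      then have "(xs!j = 1 \<and> ys!j = 0) \<or> (ys!j = 1 \<and> xs!j = 0)" using j by auto
      then show False using key[OF xs ys j(1)] key[OF ys xs j(1)] e by auto
    qed
  qed
  have img: "phi ` S \<subseteq> states B"
    using run_in_states[OF wf ZS Zrun] by (auto simp: phi_def)
  have fin: "finite (states B)" using wf by (simp add: wf_pa_def)
  have "card S = 2^k" unfolding S_def using card_lists_length_eq[of "{0::nat,1}" k] by (simp add: numeral_2_eq_2)
  then show ?thesis using card_inj_on_le[OF inj img fin] by simp
qed

theorem theorem7:
  "\<exists>c::nat. \<forall>k::nat. \<exists>(\<Sigma>::nat set) (A::(nat, nat) pa).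
     finite \<Sigma> \<and> \<Sigma> \<noteq> {} \<and> wf_pa \<Sigma> A \<and> card (states A) \<le> c * k + c \<and>
     (\<forall>n \<ge> card (states A). \<forall>A'::(nat, nat) pa.
        wf_pa \<Sigma> A' \<and> deterministic \<Sigma> A' \<and> lang \<Sigma> A' \<subseteq> lang \<Sigma> A \<and>
        lasso_lang \<Sigma> n (lang \<Sigma> A') = lasso_lang \<Sigma> n (lang \<Sigma> A)
        \<longrightarrow> 2 ^ k \<le> card (states A'))"
proof (rule exI[of _ 3], intro allI)
  fix k :: nat
  show "\<exists>(\<Sigma>::nat set) (A::(nat, nat) pa).
     finite \<Sigma> \<and> \<Sigma> \<noteq> {} \<and> wf_pa \<Sigma> A \<and> card (states A) \<le> 3 * k + 3 \<and>
     (\<forall>n \<ge> card (states A). \<forall>A'::(nat, nat) pa.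
        wf_pa \<Sigma> A' \<and> deterministic \<Sigma> A' \<and> lang \<Sigma> A' \<subseteq> lang \<Sigma> A \<and>
        lasso_lang \<Sigma> n (lang \<Sigma> A') = lasso_lang \<Sigma> n (lang \<Sigma> A)
        \<longrightarrow> 2 ^ k \<le> card (states A'))"
  proof (intro exI conjI allI impI)
    show "finite Sg" "Sg \<noteq> {}" by (auto simp: Sg_def)
    show "wf_pa Sg (autA k)" by (rule wfA)
    show "card (states (autA k)) \<le> 3 * k + 3" by (simp add: cardA)
  next
    fix n :: nat and A' :: "(nat, nat) pa"
    assume n: "n \<ge> card (states (autA k))"
    assume h: "wf_pa Sg A' \<and> deterministic Sg A' \<and> lang Sg A' \<subseteq> lang Sg (autA k) \<and>
        lasso_lang Sg n (lang Sg A') = lasso_lang Sg n (lang Sg (autA k))"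
    show "2 ^ k \<le> card (states A')"
    proof (cases "k = 0")
      case True
      have "card (init A') = 1" using h by (simp add: deterministic_def)
      then obtain q where "init A' = {q}" by (metis card_1_singletonE)
      then have "q \<in> states A'" using h by (auto simp: wf_pa_def)
      moreover have "finite (states A')" using h by (simp add: wf_pa_def)
      ultimately have "card (states A') \<ge> 1"
        by (metis One_nat_def Suc_leI card_gt_0_iff empty_iff)
      then show ?thesis using True by simp
    next
      case False
      then show ?thesis using main_bound[of k n A'] h n by (simp add: cardA)
    qed
  qed
qed

end
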